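(* Let $\mathscr A$ be a weight vector of length $n$ and $S\subseteq\{1,\dots,n\}$ with $\Delta_S\ne\emptyset$ in $M^\delta_{0,\mathscr A}$, and let $I$ be a minimal small interval containing $S$. Then for every point of $\Delta_S$, every chord in the collection of chords describing its topological type has $I$ contained entirely in one of the two intervals into which the chord divides $\{1,\dots,n\}$ (no chord separates two elements of $I$).
   Context: A weight vector is $\mathscr A=(a_1,\dots,a_n)$ with $0<a_i\le1$ and $\sum a_i>2$. A nodal genus-zero curve with marked smooth points $x_1,\dots,x_n$ (point $x_i$ of weight $a_i$) is $\mathscr A$-stable if each component has (number of nodes) + (sum of weights of its markings) $>2$, and whenever $x_i$ coincide for all $i\in S$ one has $\sum_{i\in S}a_i\le1$; $\overline M_{0,\mathscr A}$ is Hassett's fine moduli space of such curves, a smooth projective variety. An interval is a set of cyclically consecutive elements of $\{1,\dots,n\}$ (cyclic order $1<\dots<n<1$); it is large if the sum of its weights exceeds $1$ and small otherwise. $M^\delta_{0,\mathscr A}\subset\overline M_{0,\mathscr A}$ is the open subset of curves whose dual graph admits a planar embedding inducing the standard dihedral order on the legs, and such that whenever $x_i=x_j$ for all $i,j\in S$, $S$ is contained in a small interval. Its stratification by topological type has strata indexed by collections of pairwise non-crossing chords of the $n$-gon (sides labeled $1,\dots,n$), each chord dividing the sides into two large intervals, subject to stability of each tile. For $S\subseteq\{1,\dots,n\}$, the coincidence set $\Delta_S\subseteq M^\delta_{0,\mathscr A}$ is the locus where $x_i=x_j$ for all $i,j\in S$. *)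

theory Defs
  imports Complex_Main
begin

definition weight_vector :: "nat \<Rightarrow> (nat \<Rightarrow> real) \<Rightarrow> bool" where
  "weight_vector n a \<longleftrightarrow> (\<forall>i\<in>{1..n}. 0 < a i \<and> a i \<le> 1) \<and> (\<Sum>i\<in>{1..n}. a i) > 2"

definition cyc_interval :: "nat \<Rightarrow> nat set \<Rightarrow> bool" where
  "cyc_interval n J \<longleftrightarrow> (\<exists>s<n. \<exists>k\<le>n. J = (\<lambda>t. (s + t) mod n + 1) ` {..<k})"

definition small_interval :: "nat \<Rightarrow> (nat \<Rightarrow> real) \<Rightarrow> nat set \<Rightarrow> bool" where
  "small_interval n a J \<longleftrightarrow> cyc_interval n J \<and> (\<Sum>i\<in>J. a i) \<le> 1"

definition large_interval :: "nat \<Rightarrow> (nat \<Rightarrow> real) \<Rightarrow> nat set \<Rightarrow> bool" where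
  "large_interval n a J \<longleftrightarrow> cyc_interval n J \<and> (\<Sum>i\<in>J. a i) > 1"

definition min_small_interval :: "nat \<Rightarrow> (nat \<Rightarrow> real) \<Rightarrow> nat set \<Rightarrow> nat set \<Rightarrow> bool" where
  "min_small_interval n a S I \<longleftrightarrow> small_interval n a I \<and> S \<subseteq> I \<and>
     \<not> (\<exists>J. small_interval n a J \<and> S \<subseteq> J \<and> J \<subset> I)"

text \<open>A nodal genus-zero curve is described by: a finite set V of irreducible
  components (each a copy of the complex projective line, modelled as complex option,
  None = infinity), the set E of nodes (edges of the dual graph, a tree), the component
  m i carrying the marked point x_i, its position p i on that component, and the
  position q u w on component u of the node joining u and w.\<close>

definition nbrs :: "'v set set \<Rightarrow> 'v \<Rightarrow> 'v set" where
  "nbrs E u = {w. {u, w} \<in> E}"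

definition adj :: "'v set set \<Rightarrow> 'v \<Rightarrow> 'v \<Rightarrow> bool" where
  "adj E u w \<longleftrightarrow> {u, w} \<in> E"

definition is_tree :: "'v set \<Rightarrow> 'v set set \<Rightarrow> bool" where
  "is_tree V E \<longleftrightarrow> finite V \<and> V \<noteq> {} \<and>
     E \<subseteq> {{u, w} | u w. u \<in> V \<and> w \<in> V \<and> u \<noteq> w} \<and>
     (\<forall>u\<in>V. \<forall>w\<in>V. (adj E)\<^sup>*\<^sup>* u w) \<and> card E + 1 = card V"

definition side :: "'v set set \<Rightarrow> 'v set \<Rightarrow> 'v \<Rightarrow> 'v set" where
  "side E e u = {w. (adj (E - {e}))\<^sup>*\<^sup>* u w}"

definition leg_side :: "nat \<Rightarrow> (nat \<Rightarrow> 'v) \<Rightarrow> 'v set set \<Rightarrow> 'v set \<Rightarrow> 'v \<Rightarrow> nat set" where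
  "leg_side n m E e u = {i \<in> {1..n}. m i \<in> side E e u}"

definition coincide :: "(nat \<Rightarrow> 'v) \<Rightarrow> (nat \<Rightarrow> complex option) \<Rightarrow> nat set \<Rightarrow> bool" where
  "coincide m p T \<longleftrightarrow> (\<forall>i\<in>T. \<forall>j\<in>T. m i = m j \<and> p i = p j)"

definition A_stable_curve ::
  "nat \<Rightarrow> (nat \<Rightarrow> real) \<Rightarrow> 'v set \<Rightarrow> 'v set set \<Rightarrow> (nat \<Rightarrow> 'v) \<Rightarrow> (nat \<Rightarrow> complex option)
    \<Rightarrow> ('v \<Rightarrow> 'v \<Rightarrow> complex option) \<Rightarrow> bool" where
  "A_stable_curve n a V E m p q \<longleftrightarrow>
     is_tree V E \<and>
     (\<forall>i\<in>{1..n}. m i \<in> V) \<and>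
     (\<forall>u\<in>V. inj_on (q u) (nbrs E u)) \<and>
     (\<forall>i\<in>{1..n}. \<forall>w\<in>nbrs E (m i). p i \<noteq> q (m i) w) \<and>
     (\<forall>u\<in>V. real (card (nbrs E u)) + (\<Sum>i\<in>{i\<in>{1..n}. m i = u}. a i) > 2) \<and>
     (\<forall>T\<subseteq>{1..n}. coincide m p T \<longrightarrow> (\<Sum>i\<in>T. a i) \<le> 1)"

text \<open>Points of M^delta: the dual tree is dihedral (every node divides the legs into
  two cyclic intervals, i.e. is a chord of the n-gon), and every coincidence set lies in
  a small interval.\<close>
definition in_M_delta ::
  "nat \<Rightarrow> (nat \<Rightarrow> real) \<Rightarrow> 'v set \<Rightarrow> 'v set set \<Rightarrow> (nat \<Rightarrow> 'v) \<Rightarrow> (nat \<Rightarrow> complex option)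
    \<Rightarrow> ('v \<Rightarrow> 'v \<Rightarrow> complex option) \<Rightarrow> bool" where
  "in_M_delta n a V E m p q \<longleftrightarrow>
     A_stable_curve n a V E m p q \<and>
     (\<forall>e\<in>E. \<forall>u\<in>e. cyc_interval n (leg_side n m E e u)) \<and>
     (\<forall>T\<subseteq>{1..n}. coincide m p T \<longrightarrow> (\<exists>J. small_interval n a J \<and> T \<subseteq> J))"

end

theory Submission
  imports Defs "HOL-Number_Theory.Cong"
begin


definition fj :: "nat \<Rightarrow> nat \<Rightarrow> nat \<Rightarrow> nat" where
  "fj n j t = (j + t) mod n + 1"

lemma iv_repr:
  assumes "n > 0" "cyc_interval n J" "j \<in> {1..n}" "j \<notin> J"
  shows "\<exists>x y. x \<le> y \<and> y < n \<and> J = fj n j ` {x..<y}"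
proof -
  obtain s k where sk: "s < n" "k \<le> n" "J = (\<lambda>t. (s + t) mod n + 1) ` {..<k}"
    using assms(2) unfolding cyc_interval_def by blast
  define x where "x = (s + n - j mod n) mod n"
  have xn: "x < n" using assms(1) x_def by simp
  have key: "(j + (x + t)) mod n = (s + t) mod n" for t
  proof -
    have "(j + (x + t)) mod n = (j mod n + x + t) mod n" by (simp add: mod_add_left_eq add.assoc)
    also have "\<dots> = (j mod n + (s + n - j mod n) + t) mod n"
    proof -
      have "(j mod n + x + t) mod n = ((j mod n + t) + (s + n - j mod n) mod n) mod n" unfolding x_def by (simp add: ac_simps)
      also have "\<dots> = ((j mod n + t) + (s + n - j mod n)) mod n" by (rule mod_add_right_eq)
      also have "(j mod n + t) + (s + n - j mod n) = j mod n + (s + n - j mod n) + t" by simp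
      finally show ?thesis .
    qed
    also have "j mod n + (s + n - j mod n) = s + n" using assms(1) 
    proof -
      have "j mod n < n" using assms(1) by simp
      then show ?thesis by linarith
    qed
    also have "(s + n + t) mod n = (s + t) mod n"
    proof -
      have "s + n + t = (s + t) + n" by simp
      then show ?thesis by (metis mod_add_self2)
    qed
    finally show ?thesis by simp
  qed
  have J2: "J = fj n j ` {x..<x+k}"
  proof -
    have "{x..<x+k} = (\<lambda>t. x + t) ` {..<k}" by (simp add: image_add_atLeastLessThan lessThan_atLeast0 add.commute)
    then have "fj n j ` {x..<x+k} = (\<lambda>t. fj n j (x + t)) ` {..<k}" by auto
    then show ?thesis using sk(3) key unfolding fj_def by auto
  qed
  have "x + k < n"
  proof (rule ccontr)
    assume "\<not> x + k < n"
    then have "n - 1 \<in> {x..<x+k}" using xn by auto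
    then have "fj n j (n - 1) \<in> J" using J2 by auto
    moreover have "fj n j (n - 1) = j"
    proof -
      have "j + (n - 1) = (j - 1) + n" using assms(1,3) by simp
      then have "(j + (n - 1)) mod n = ((j - 1) + n) mod n" by simp
      also have "\<dots> = (j - 1) mod n" by simp
      also have "\<dots> = j - 1" using assms(3) by (intro mod_less) auto
      finally show ?thesis unfolding fj_def using assms(3) by simp
    qed
    ultimately show False using assms(4) by simp
  qed
  then show ?thesis using J2 by (intro exI[of _ x] exI[of _ "x+k"]) auto
qed

lemma fj_inj: assumes "n > 0" shows "inj_on (fj n j) {..<n}"
proof (rule inj_onI)
  fix a b assume "a \<in> {..<n}" "b \<in> {..<n}" "fj n j a = fj n j b"
  then have "(j + a) mod n = (j + b) mod n" unfolding fj_def by simp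
  then have "[j + a = j + b] (mod n)" by (simp add: cong_def)
  then have "[a = b] (mod n)" using cong_add_lcancel_nat by blast
  then have "a mod n = b mod n" unfolding cong_def .
  then show "a = b" using \<open>a \<in> _\<close> \<open>b \<in> _\<close> by simp
qed

lemma fj_back: assumes h: "n > 0" "x \<le> y" "y \<le> n" shows "cyc_interval n (fj n j ` {x..<y})"
proof -
  have a1: "(j + x) mod n < n" using h(1) by simp
  have a2: "y - x \<le> n" using h by simp
  have "{x..<y} = (\<lambda>t. x + t) ` {..<y-x}"
    using h(2) by (simp add: image_add_atLeastLessThan lessThan_atLeast0)
  then have "fj n j ` {x..<y} = (\<lambda>t. fj n j (x + t)) ` {..<y-x}" by auto
  also have "\<dots> = (\<lambda>t. ((j + x) mod n + t) mod n + 1) ` {..<y-x}"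
    unfolding fj_def by (simp add: mod_add_left_eq add.assoc)
  finally have a3: "fj n j ` {x..<y} = (\<lambda>t. ((j + x) mod n + t) mod n + 1) ` {..<y-x}" .
  show ?thesis unfolding cyc_interval_def using a1 a2 a3 by blast
qed

lemma iv_inter:
  assumes "n > 0" "cyc_interval n I" "cyc_interval n K" "j \<in> {1..n}" "j \<notin> I" "j \<notin> K"
  shows "cyc_interval n (I \<inter> K)"
proof -
  obtain x y where 1: "x \<le> y" "y < n" "I = fj n j ` {x..<y}" using iv_repr assms by blast
  obtain x' y' where 2: "x' \<le> y'" "y' < n" "K = fj n j ` {x'..<y'}" using iv_repr assms by blast
  have "fj n j ` ({x..<y} \<inter> {x'..<y'}) = fj n j ` {x..<y} \<inter> fj n j ` {x'..<y'}"
    by (rule inj_on_image_Int[OF fj_inj[OF assms(1)]]) (use 1 2 in auto)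
  then have "I \<inter> K = fj n j ` ({x..<y} \<inter> {x'..<y'})" using 1 2 by simp
  also have "{x..<y} \<inter> {x'..<y'} = {max x x'..<min y y'}" by auto
  finally have eq: "I \<inter> K = fj n j ` {max x x'..<min y y'}" .
  show ?thesis
  proof (cases "max x x' \<le> min y y'")
    case True then show ?thesis using eq fj_back[OF assms(1)] 1 2 by simp
  next
    case False
    then have "I \<inter> K = fj n j ` {max x x'..<max x x'}" using eq by auto
    then show ?thesis using fj_back[OF assms(1), of "max x x'" "max x x'" j] 1 2 by simp
  qed
qed



lemma rtranclp_sym_adj: "(adj F)\<^sup>*\<^sup>* x y \<Longrightarrow> (adj F)\<^sup>*\<^sup>* y x"
proof (induction rule: rtranclp_induct)
  case base then show ?case by simp
next
  case (step y z)
  have "adj F z y" using step(2) unfolding adj_def by (simp add: insert_commute)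
  then show ?case using step(3) by (rule converse_rtranclp_into_rtranclp)
qed

lemma rtranclp_lift: "(\<And>a b. P a b \<Longrightarrow> Q\<^sup>*\<^sup>* a b) \<Longrightarrow> P\<^sup>*\<^sup>* x y \<Longrightarrow> Q\<^sup>*\<^sup>* x y"
proof -
  assume h: "\<And>a b. P a b \<Longrightarrow> Q\<^sup>*\<^sup>* a b"
  show "P\<^sup>*\<^sup>* x y \<Longrightarrow> Q\<^sup>*\<^sup>* x y"
  proof (induction rule: rtranclp_induct)
    case base then show ?case by simp
  next
    case (step y z) then show ?case using h[of y z] by simp
  qed
qed

lemma conn_card:
  fixes F :: "'v set set"
  assumes fin: "finite X" and X: "X = {x. (adj F)\<^sup>*\<^sup>* x0 x}"
  shows "card X \<le> card {f\<in>F. f \<subseteq> X} + 1"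
proof -
  let ?R = "adj F"
  define d where "d x = (LEAST k. (?R ^^ k) x0 x)" for x
  have dI: "(?R ^^ d x) x0 x" if "x \<in> X" for x
  proof -
    from that X obtain k where "(?R ^^ k) x0 x" using rtranclp_power by force
    then show ?thesis unfolding d_def by (rule LeastI)
  qed
  have dle: "(?R ^^ k) x0 x \<Longrightarrow> d x \<le> k" for x k unfolding d_def by (rule Least_le)
  have par: "\<exists>y. ?R y x \<and> Suc (d y) = d x \<and> y \<in> X" if "x \<in> X" "x \<noteq> x0" for x
  proof -
    have hx: "(?R ^^ d x) x0 x" using dI that(1) .
    have "d x \<noteq> 0" using hx that(2) by (cases "d x") auto
    then obtain k where k: "d x = Suc k" by (cases "d x") auto
    then obtain y where y: "(?R ^^ k) x0 y" "?R y x" using hx by (auto elim: relpowp_Suc_E)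
    have yX: "y \<in> X" using y(1) X by (auto intro: relpowp_imp_rtranclp)
    have "d y \<le> k" using dle y(1) .
    moreover have "(?R ^^ Suc (d y)) x0 x" using dI[OF yX] y(2) by (rule relpowp_Suc_I)
    then have "d x \<le> Suc (d y)" by (rule dle)
    ultimately have "Suc (d y) = d x" using k by simp
    then show ?thesis using y yX by blast
  qed
  define p where "p x = (SOME y. ?R y x \<and> Suc (d y) = d x \<and> y \<in> X)" for x
  have pp: "?R (p x) x \<and> Suc (d (p x)) = d x \<and> p x \<in> X" if "x \<in> X" "x \<noteq> x0" for x
    unfolding p_def using someI_ex[OF par[OF that]] .
  define g where "g x = {x, p x}" for x
  have inj: "inj_on g (X - {x0})"
  proof (rule inj_onI)
    fix x y assume xy: "x \<in> X - {x0}" "y \<in> X - {x0}" "g x = g y"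
    show "x = y"
    proof (rule ccontr)
      assume "x \<noteq> y"
      then have "x = p y" "y = p x" using xy(3) unfolding g_def by (auto simp: doubleton_eq_iff)
      then show False using pp[of x] pp[of y] xy by auto
    qed
  qed
  have img: "g ` (X - {x0}) \<subseteq> {f\<in>F. f \<subseteq> X}"
  proof
    fix f assume "f \<in> g ` (X - {x0})"
    then obtain x where x: "x \<in> X" "x \<noteq> x0" "f = {x, p x}" unfolding g_def by auto
    then have "adj F (p x) x" "p x \<in> X" using pp by auto
    then show "f \<in> {f\<in>F. f \<subseteq> X}" using x unfolding adj_def by (auto simp: insert_commute)
  qed
  have "finite {f\<in>F. f \<subseteq> X}"
    by (rule finite_subset[of _ "Pow X"]) (use fin in auto)
  then have "card (X - {x0}) \<le> card {f\<in>F. f \<subseteq> X}"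
    using card_inj_on_le[OF inj img] by simp
  moreover have "x0 \<in> X" using X by simp
  ultimately show ?thesis using fin by (simp add: card_Diff_singleton)
qed

lemma handshake:
  fixes F :: "'v set set"
  assumes "finite A" "finite F" "\<forall>f\<in>F. f \<subseteq> A"
  shows "(\<Sum>v\<in>A. card {x. {v, x} \<in> F}) \<le> 2 * card F"
proof -
  have fin: "\<forall>v\<in>A. finite {x. {v, x} \<in> F}"
  proof
    fix v assume "v \<in> A"
    have "{x. {v, x} \<in> F} \<subseteq> A" using assms(3) by auto
    then show "finite {x. {v, x} \<in> F}" using assms(1) by (rule finite_subset)
  qed
  have s1: "(\<Sum>v\<in>A. card {x. {v, x} \<in> F}) = card (SIGMA v:A. {x. {v, x} \<in> F})"
    by (rule card_SigmaI[OF assms(1) fin, symmetric])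
  have "(SIGMA v:A. {x. {v, x} \<in> F}) \<subseteq> (\<Union>f\<in>F. {(x, y). {x, y} = f})" by blast
  then have "card (SIGMA v:A. {x. {v, x} \<in> F}) \<le> card (\<Union>f\<in>F. {(x, y). {x, y} = f})"
  proof (rule card_mono[rotated])
    show "finite (\<Union>f\<in>F. {(x, y). {x, y} = f})"
    proof (rule finite_subset[of _ "A \<times> A"])
      show "(\<Union>f\<in>F. {(x, y). {x, y} = f}) \<subseteq> A \<times> A"
      proof
        fix z assume "z \<in> (\<Union>f\<in>F. {(x, y). {x, y} = f})"
        then obtain f x y where "f \<in> F" "z = (x, y)" "{x, y} = f" by blast
        then show "z \<in> A \<times> A" using assms(3) by blast
      qed
    qed (use assms in simp)
  qed
  also have "\<dots> \<le> (\<Sum>f\<in>F. card {(x, y). {x, y} = f})" by (rule card_UN_le[OF assms(2)])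
  also have "\<dots> \<le> (\<Sum>f\<in>F. 2)"
  proof (rule sum_mono)
    fix f assume "f \<in> F"
    show "card {(x, y). {x, y} = f} \<le> 2"
    proof (cases "\<exists>c d. f = {c, d}")
      case True
      then obtain c d where f: "f = {c, d}" by blast
      have "{(x, y). {x, y} = f} \<subseteq> {(c, d), (d, c)}"
      proof
        fix z assume "z \<in> {(x, y). {x, y} = f}"
        then obtain x y where "z = (x, y)" "{x, y} = {c, d}" using f by blast
        then show "z \<in> {(c, d), (d, c)}" by (auto simp: doubleton_eq_iff)
      qed
      then have "card {(x, y). {x, y} = f} \<le> card {(c, d), (d, c)}" by (rule card_mono[rotated]) simp
      also have "\<dots> \<le> 2" by (rule card_insert_le_m1) auto
      finally show ?thesis .
    next
      case False
      then have "\<forall>x y. {x, y} \<noteq> f" by blast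
      then have "{(x, y). {x, y} = f} = {}" by auto
      then show ?thesis by simp
    qed
  qed
  finally show ?thesis using s1 by simp
qed

lemma side_facts:
  fixes E :: "'v set set"
  assumes st: "A_stable_curve n a V E m p q" and e: "e \<in> E" "e = {u, w}" "u \<noteq> w"
  shows "side E e u \<inter> side E e w = {}"
    and "V \<subseteq> side E e u \<union> side E e w"
    and "(\<Sum>i\<in>leg_side n m E e u. a i) > 1"
proof -
  have tree: "is_tree V E" using st unfolding A_stable_curve_def by simp
  have finV: "finite V" and Esub: "E \<subseteq> {{u, w} | u w. u \<in> V \<and> w \<in> V \<and> u \<noteq> w}"
    and conn: "\<forall>x\<in>V. \<forall>y\<in>V. (adj E)\<^sup>*\<^sup>* x y" and cardE: "card E + 1 = card V"
    using tree unfolding is_tree_def by auto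
  have edge: "\<exists>c d. f = {c, d} \<and> c \<in> V \<and> d \<in> V \<and> c \<noteq> d" if "f \<in> E" for f
    using Esub that by blast
  have EPow: "E \<subseteq> Pow V" using Esub by auto
  have finE: "finite E" using finV EPow by (meson finite_Pow_iff finite_subset)
  have eV: "e \<subseteq> V" using EPow e(1) by blast
  have uV: "u \<in> V" and wV: "w \<in> V" using eV e(2) by auto
  let ?R = "adj (E - {e})"
  define A where "A = side E e u"
  define B where "B = side E e w"
  have adjV: "y \<in> V" if "adj E' x y" "E' \<subseteq> E" for E' x y
  proof -
    have "{x, y} \<in> E" using that unfolding adj_def by blast
    then have "{x, y} \<subseteq> V" using EPow by blast
    then show ?thesis by simp
  qed
  have reachV: "y \<in> V" if "?R\<^sup>*\<^sup>* x y" "x \<in> V" for x y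
    using that by (induction rule: rtranclp_induct) (auto intro: adjV[of "E - {e}"])
  have AV: "A \<subseteq> V" using reachV uV unfolding A_def side_def by auto
  have BV: "B \<subseteq> V" using reachV wV unfolding B_def side_def by auto
  have finA: "finite A" using AV finV finite_subset by auto
  have finB: "finite B" using BV finV finite_subset by auto
  have uA: "u \<in> A" unfolding A_def side_def by simp
  have wB: "w \<in> B" unfolding B_def side_def by simp
  have disj: "A \<inter> B = {}"
  proof (rule ccontr)
    assume "A \<inter> B \<noteq> {}"
    then obtain x where "?R\<^sup>*\<^sup>* u x" "?R\<^sup>*\<^sup>* w x" unfolding A_def B_def side_def by auto
    then have uw: "?R\<^sup>*\<^sup>* u w" using rtranclp_sym_adj by (metis rtranclp_trans)
    have wu: "?R\<^sup>*\<^sup>* w u" using rtranclp_sym_adj[OF uw] .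
    have lift: "?R\<^sup>*\<^sup>* x y" if "adj E x y" for x y
    proof (cases "{x, y} = e")
      case True
      then have "x \<in> {u, w}" "y \<in> {u, w}" using e(2) by auto
      then show ?thesis using uw wu by auto
    next
      case False
      then have "?R x y" using that unfolding adj_def by auto
      then show ?thesis by simp
    qed
    have "V = {x. ?R\<^sup>*\<^sup>* u x}"
    proof
      show "V \<subseteq> {x. ?R\<^sup>*\<^sup>* u x}"
      proof
        fix v assume "v \<in> V"
        then have "(adj E)\<^sup>*\<^sup>* u v" using conn uV by blast
        then show "v \<in> {x. ?R\<^sup>*\<^sup>* u x}" using rtranclp_lift[of "adj E" ?R, OF lift] by blast
      qed
      show "{x. ?R\<^sup>*\<^sup>* u x} \<subseteq> V" using reachV uV by auto
    qed
    then have c1: "card V \<le> card {f\<in>E - {e}. f \<subseteq> V} + 1" by (rule conn_card[OF finV])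
    have c2: "card {f\<in>E - {e}. f \<subseteq> V} \<le> card (E - {e})" by (rule card_mono) (use finE in auto)
    have c3: "card (E - {e}) = card E - 1" using e(1) finE by simp
    have c4: "card E > 0" using e(1) finE card_gt_0_iff by blast
    show False using c1 c2 c3 c4 cardE by linarith
  qed
  show "side E e u \<inter> side E e w = {}" using disj A_def B_def by simp
  have cov: "y \<in> A \<union> B" if "(adj E)\<^sup>*\<^sup>* u y" for y
    using that
  proof (induction rule: rtranclp_induct)
    case base then show ?case using uA by simp
  next
    case (step y z)
    show ?case
    proof (cases "{y, z} = e")
      case True
      then have "z \<in> {u, w}" using e(2) by auto
      then show ?thesis using uA wB by auto
    next
      case False
      then have R: "?R y z" using step(2) unfolding adj_def by auto
      from step(3) show ?thesis
      proof
        assume "y \<in> A" then show ?thesis using R unfolding A_def side_def by auto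
      next
        assume "y \<in> B"
        then have "z \<in> B" using R unfolding B_def side_def by (auto intro: rtranclp.rtrancl_into_rtrancl)
        then show ?thesis by simp
      qed
    qed
  qed
  show "V \<subseteq> side E e u \<union> side E e w" using cov conn uV A_def B_def by blast
  define EA where "EA = {f\<in>E - {e}. f \<subseteq> A}"
  define EB where "EB = {f\<in>E - {e}. f \<subseteq> B}"
  have cA: "card A \<le> card EA + 1" unfolding EA_def
    by (rule conn_card[OF finA]) (simp add: A_def side_def)
  have cB: "card B \<le> card EB + 1" unfolding EB_def
    by (rule conn_card[OF finB]) (simp add: B_def side_def)
  have EAB: "EA \<inter> EB = {}"
  proof (rule ccontr)
    assume "EA \<inter> EB \<noteq> {}"
    then obtain f where "f \<in> E" "f \<subseteq> A" "f \<subseteq> B" unfolding EA_def EB_def by auto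
    then show False using edge disj by blast
  qed
  have "card EA + card EB = card (EA \<union> EB)"
    by (rule card_Un_disjoint[symmetric]) (use finE EAB in \<open>auto simp: EA_def EB_def\<close>)
  also have "\<dots> \<le> card (E - {e})" by (rule card_mono) (use finE in \<open>auto simp: EA_def EB_def\<close>)
  also have "\<dots> = card E - 1" using e(1) finE by simp
  finally have cEAB: "card EA + card EB \<le> card E - 1" .
  have "card A + card B = card (A \<union> B)" using card_Un_disjoint[OF finA finB disj] by simp
  also have "\<dots> \<le> card V" by (rule card_mono[OF finV]) (use AV BV in auto)
  finally have cAB: "card A + card B \<le> card V" .
  have "card V \<le> card (A \<union> B)" by (rule card_mono) (use finA finB cov conn uV in \<open>auto simp: A_def B_def\<close>)
  then have cAB2: "card V \<le> card A + card B" using card_Un_le[of A B] by linarith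
  have Epos: "card E \<ge> 1" using e(1) finE by (metis One_nat_def Suc_leI card_gt_0_iff empty_iff)
  have key: "card EA + 1 \<le> card A" using cA cB cEAB cAB2 cardE Epos by linarith
  have deg: "card (nbrs E v) \<le> card {x. {v, x} \<in> EA} + (if v = u then 1 else 0)" if vA: "v \<in> A" for v
  proof -
    have sub: "nbrs E v \<subseteq> {x. {v, x} \<in> EA} \<union> (if v = u then {w} else {})"
    proof
      fix x assume "x \<in> nbrs E v"
      then have vx: "{v, x} \<in> E" unfolding nbrs_def by simp
      show "x \<in> {x. {v, x} \<in> EA} \<union> (if v = u then {w} else {})"
      proof (cases "{v, x} = e")
        case True
        then have "v \<in> {u, w}" "x \<in> {u, w}" using e(2) by auto
        moreover have "v \<noteq> w" using vA wB disj by auto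
        ultimately show ?thesis using True e(2,3) by (auto simp: doubleton_eq_iff)
      next
        case False
        then have "?R v x" using vx unfolding adj_def by auto
        then have "x \<in> A" using vA unfolding A_def side_def by auto
        then have "{v, x} \<in> EA" using vA vx False unfolding EA_def by auto
        then show ?thesis by simp
      qed
    qed
    have f1: "finite {x. {v, x} \<in> EA}"
      by (rule finite_subset[OF _ finA]) (auto simp: EA_def)
    have "card (nbrs E v) \<le> card ({x. {v, x} \<in> EA} \<union> (if v = u then {w} else {}))"
      by (rule card_mono[OF _ sub]) (use f1 in simp)
    also have "\<dots> \<le> card {x. {v, x} \<in> EA} + card (if v = u then {w} else {})"
      by (rule card_Un_le)
    finally show ?thesis by (cases "v = u") auto
  qed
  have hs: "(\<Sum>v\<in>A. card {x. {v, x} \<in> EA}) \<le> 2 * card EA"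
    by (rule handshake[OF finA]) (use finE in \<open>auto simp: EA_def\<close>)
  have "(\<Sum>v\<in>A. card (nbrs E v)) \<le> (\<Sum>v\<in>A. card {x. {v, x} \<in> EA} + (if v = u then 1 else 0))"
    by (rule sum_mono) (rule deg)
  also have "\<dots> = (\<Sum>v\<in>A. card {x. {v, x} \<in> EA}) + 1"
    using finA uA by (simp add: sum.distrib)
  finally have degsum: "(\<Sum>v\<in>A. card (nbrs E v)) \<le> 2 * card EA + 1" using hs by linarith
  have stab: "\<forall>v\<in>V. real (card (nbrs E v)) + (\<Sum>i\<in>{i\<in>{1..n}. m i = v}. a i) > 2"
    using st unfolding A_stable_curve_def by blast
  have "(\<Sum>v\<in>A. (2::real)) < (\<Sum>v\<in>A. real (card (nbrs E v)) + (\<Sum>i\<in>{i\<in>{1..n}. m i = v}. a i))"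
    by (rule sum_strict_mono[OF finA]) (use uA stab AV in auto)
  then have ineq: "2 * real (card A) < real (\<Sum>v\<in>A. card (nbrs E v)) + (\<Sum>v\<in>A. \<Sum>i\<in>{i\<in>{1..n}. m i = v}. a i)"
    by (simp add: sum.distrib mult.commute)
  have grp: "(\<Sum>v\<in>A. \<Sum>i\<in>{i\<in>{1..n}. m i = v}. a i) = (\<Sum>i\<in>leg_side n m E e u. a i)"
  proof -
    have "(\<Sum>v\<in>A. \<Sum>i\<in>{i. i \<in> leg_side n m E e u \<and> m i = v}. a i) = (\<Sum>i\<in>leg_side n m E e u. a i)"
      by (rule sum.group[OF _ finA]) (auto simp: leg_side_def A_def)
    moreover have "{i. i \<in> leg_side n m E e u \<and> m i = v} = {i\<in>{1..n}. m i = v}" if "v \<in> A" for v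
      using that by (auto simp: leg_side_def A_def)
    ultimately show ?thesis by simp
  qed
  have "real (\<Sum>v\<in>A. card (nbrs E v)) \<le> 2 * real (card EA) + 1" using degsum by linarith
  moreover have "real (card EA) + 1 \<le> real (card A)" using key by linarith
  ultimately show "(\<Sum>i\<in>leg_side n m E e u. a i) > 1" using ineq grp by linarith
qed


lemma cyc_sub: assumes "cyc_interval n J" shows "J \<subseteq> {1..n}"
proof
  fix x assume "x \<in> J"
  then obtain s k t where st: "s < n" "x = (s + t) mod n + 1" using assms unfolding cyc_interval_def by blast
  have "(s + t) mod n < n" using st(1) by simp
  then show "x \<in> {1..n}" using st(2) by simp
qed

lemma core:
  assumes n0: "n > 0" and pos: "\<forall>i\<in>{1..n}. a i > 0" and I: "min_small_interval n a S I"
    and SL: "S \<subseteq> L" and L: "cyc_interval n L"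
    and Ly: "Ly \<subseteq> {1..n}" "L \<inter> Ly = {}" "(\<Sum>i\<in>Ly. a i) > 1"
  shows "I \<subseteq> L"
proof (rule ccontr)
  assume nI: "\<not> I \<subseteq> L"
  have smI: "small_interval n a I" and SI: "S \<subseteq> I"
    and nomin: "\<not> (\<exists>J. small_interval n a J \<and> S \<subseteq> J \<and> J \<subset> I)"
    using I unfolding min_small_interval_def by auto
  have cI: "cyc_interval n I" and wI: "(\<Sum>i\<in>I. a i) \<le> 1" using smI unfolding small_interval_def by auto
  have Isub: "I \<subseteq> {1..n}" using cyc_sub[OF cI] .
  have finI: "finite I" using Isub finite_subset by blast
  have mono: "(\<Sum>i\<in>T. a i) \<le> (\<Sum>i\<in>I. a i)" if "T \<subseteq> I" for T
    by (rule sum_mono2[OF finI that]) (use pos Isub in \<open>auto intro: less_imp_le\<close>)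
  have "\<not> Ly \<subseteq> I"
  proof
    assume "Ly \<subseteq> I"
    then have "(\<Sum>i\<in>Ly. a i) \<le> 1" using mono wI by (meson order_trans)
    then show False using Ly(3) by simp
  qed
  then obtain j where j: "j \<in> Ly" "j \<notin> I" by blast
  have jL: "j \<notin> L" using j Ly(2) by blast
  have c: "cyc_interval n (I \<inter> L)" using iv_inter[OF n0 cI L _ j(2) jL] j(1) Ly(1) by blast
  have "(\<Sum>i\<in>I \<inter> L. a i) \<le> 1" using mono[of "I \<inter> L"] wI by simp
  then have "small_interval n a (I \<inter> L)" using c unfolding small_interval_def by simp
  moreover have "S \<subseteq> I \<inter> L" using SI SL by blast
  moreover have "I \<inter> L \<subset> I" using nI by blast
  ultimately show False using nomin by blast
qed

theorem mainTheorem12: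
  fixes n :: nat and a :: "nat \<Rightarrow> real" and S I :: "nat set"
    and V :: "'v set" and E :: "'v set set" and m :: "nat \<Rightarrow> 'v"
    and p :: "nat \<Rightarrow> complex option" and q :: "'v \<Rightarrow> 'v \<Rightarrow> complex option"
  assumes "weight_vector n a"
    and "S \<subseteq> {1..n}"
    and "min_small_interval n a S I"
    and "in_M_delta n a V E m p q"
    and "coincide m p S"
  shows "\<forall>e\<in>E. \<forall>u\<in>e. I \<subseteq> leg_side n m E e u \<or> I \<inter> leg_side n m E e u = {}"
proof (intro ballI)
  fix e u assume eE: "e \<in> E" and ue: "u \<in> e"
  have st: "A_stable_curve n a V E m p q" and cyc: "\<forall>e\<in>E. \<forall>u\<in>e. cyc_interval n (leg_side n m E e u)"
    using assms(4) unfolding in_M_delta_def by blast+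
  have Esub: "E \<subseteq> {{u, w} | u w. u \<in> V \<and> w \<in> V \<and> u \<noteq> w}"
  proof -
    have "is_tree V E" using st by (simp add: A_stable_curve_def)
    then show ?thesis by (simp add: is_tree_def)
  qed
  obtain c d where cd: "e = {c, d}" "c \<noteq> d" using Esub eE by blast
  obtain w where w: "e = {u, w}" "u \<noteq> w"
  proof (cases "u = c")
    case True then show ?thesis using that cd by blast
  next
    case False then have "u = d" using ue cd by blast
    then show ?thesis using that cd by (metis insert_commute)
  qed
  have w': "e = {w, u}" using w by (simp add: insert_commute)
  have we: "w \<in> e" using w by simp
  have pos: "\<forall>i\<in>{1..n}. a i > 0" using assms(1) unfolding weight_vector_def by auto
  have n0: "n > 0"
  proof (rule ccontr)
    assume "\<not> n > 0" then have "{1..n} = {}" by simp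
    then show False using assms(1) unfolding weight_vector_def by simp
  qed
  define L where "L = leg_side n m E e u"
  define L2 where "L2 = leg_side n m E e w"
  have cL: "cyc_interval n L" using cyc eE ue L_def by blast
  have cL2: "cyc_interval n L2" using cyc eE we L2_def by blast
  have dsj: "side E e u \<inter> side E e w = {}" by (rule side_facts(1)[OF st eE w])
  have cov: "V \<subseteq> side E e u \<union> side E e w" by (rule side_facts(2)[OF st eE w])
  have s1: "(\<Sum>i\<in>L. a i) > 1" unfolding L_def by (rule side_facts(3)[OF st eE w])
  have s2: "(\<Sum>i\<in>L2. a i) > 1" unfolding L2_def by (rule side_facts(3)[OF st eE w' w(2)[symmetric]])
  have LL2: "L \<inter> L2 = {}" using dsj unfolding L_def L2_def leg_side_def by blast
  have L2n: "L2 \<subseteq> {1..n}" unfolding L2_def leg_side_def by blast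
  have Ln: "L \<subseteq> {1..n}" unfolding L_def leg_side_def by blast
  show "I \<subseteq> leg_side n m E e u \<or> I \<inter> leg_side n m E e u = {}"
  proof (cases "S = {}")
    case True
    then have "I \<subseteq> L" using core[OF n0 pos assms(3) _ cL L2n LL2 s2] by simp
    then show ?thesis unfolding L_def by simp
  next
    case False
    then obtain i0 where i0: "i0 \<in> S" by blast
    have mV: "m i0 \<in> V" using st i0 assms(2) unfolding A_stable_curve_def by auto
    have same: "\<forall>i\<in>S. m i = m i0" using assms(5) i0 unfolding coincide_def by blast
    from cov mV have "m i0 \<in> side E e u \<or> m i0 \<in> side E e w" by blast
    then show ?thesis
    proof
      assume "m i0 \<in> side E e u"
      then have "S \<subseteq> L" using same assms(2) unfolding L_def leg_side_def by auto
      then have "I \<subseteq> L" using core[OF n0 pos assms(3) _ cL L2n LL2 s2] by simp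
      then show ?thesis unfolding L_def by simp
    next
      assume "m i0 \<in> side E e w"
      then have "S \<subseteq> L2" using same assms(2) unfolding L2_def leg_side_def by auto
      then have "I \<subseteq> L2" using core[OF n0 pos assms(3) _ cL2 Ln _ s1] LL2 by blast
      then have "I \<inter> L = {}" using LL2 by blast
      then show ?thesis unfolding L_def by simp
    qed
  qed
qed

end
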